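(* Let $X$ be a set and $f=(f_1,\ldots,f_m):X\to\mathbb{R}^m$ a mapping such that $f(X)$ is convex. Then the following are equivalent: $(\alpha)$ $\mathrm{WE}(f,X)=\mathrm{E}(f,X)$; $(\beta)$ $\displaystyle\bigcup_{\emptyset\neq I\subseteq M}\mathrm{E}(f_I,X)\subseteq\mathrm{E}(f,X)$, where $M=\{1,\ldots,m\}$.
   Context: Let $M=\{1,\ldots,m\}$. For a nonempty $I\subseteq M$ and $y,y'\in\mathbb{R}^m$: $y\lneq_I y'$ means $y_i\leq y'_i$ for all $i\in I$ and $y_j<y'_j$ for some $j\in I$; $y<_I y'$ means $y_i<y'_i$ for all $i\in I$. For $Y\subseteq\mathbb{R}^m$, $\mathrm{M}_I Y$ (resp. $\mathrm{WM}_I Y$) is the set of all $y'\in Y$ for which there is no $y\in Y$ with $y\lneq_I y'$ (resp. $y<_I y'$). For $f=(f_1,\ldots,f_m):X\to\mathbb{R}^m$ and $I=\{i_1<\cdots<i_k\}$, $f_I=(f_{i_1},\ldots,f_{i_k})$, and $\mathrm{E}(f_I,X)=f^{-1}(\mathrm{M}_I f(X))$, $\mathrm{WE}(f_I,X)=f^{-1}(\mathrm{WM}_I f(X))$; $\mathrm{E}(f,X)=\mathrm{E}(f_M,X)$, $\mathrm{WE}(f,X)=\mathrm{WE}(f_M,X)$. *)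

theory Defs
  imports "HOL-Analysis.Analysis"
begin

text \<open>Vectors in R^m are modelled as real^'m, with index set M = UNIV :: 'm set.\<close>

definition le_I :: "'m set \<Rightarrow> real^'m \<Rightarrow> real^'m \<Rightarrow> bool" where
  "le_I I y y' \<longleftrightarrow> (\<forall>i\<in>I. y$i \<le> y'$i) \<and> (\<exists>j\<in>I. y$j < y'$j)"

definition lt_I :: "'m set \<Rightarrow> real^'m \<Rightarrow> real^'m \<Rightarrow> bool" where
  "lt_I I y y' \<longleftrightarrow> (\<forall>i\<in>I. y$i < y'$i)"

definition Min_I :: "'m set \<Rightarrow> (real^'m) set \<Rightarrow> (real^'m) set" where
  "Min_I I Y = {y'\<in>Y. \<not> (\<exists>y\<in>Y. le_I I y y')}"

definition WMin_I :: "'m set \<Rightarrow> (real^'m) set \<Rightarrow> (real^'m) set" where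
  "WMin_I I Y = {y'\<in>Y. \<not> (\<exists>y\<in>Y. lt_I I y y')}"

definition Eff :: "('a \<Rightarrow> real^'m) \<Rightarrow> 'm set \<Rightarrow> 'a set \<Rightarrow> 'a set" where
  "Eff f I X = {x\<in>X. f x \<in> Min_I I (f ` X)}"

definition WEff :: "('a \<Rightarrow> real^'m) \<Rightarrow> 'm set \<Rightarrow> 'a set \<Rightarrow> 'a set" where
  "WEff f I X = {x\<in>X. f x \<in> WMin_I I (f ` X)}"

end

theory Submission
  imports Defs
begin

lemma key:
  fixes Y :: "(real^'m) set"
  assumes cv: "convex Y"
  shows "I \<noteq> {} \<Longrightarrow> y \<in> WMin_I I Y \<Longrightarrow> \<exists>J. J \<noteq> {} \<and> J \<subseteq> I \<and> y \<in> Min_I J Y"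
proof (induction "card I" arbitrary: I rule: less_induct)
  case less
  show ?case
  proof (cases "y \<in> Min_I I Y")
    case True then show ?thesis using less.prems by blast
  next
    case False
    have yY: "y \<in> Y" and nw: "\<not> (\<exists>w\<in>Y. lt_I I w y)" using less.prems(2) by (auto simp: WMin_I_def)
    then obtain z where zY: "z \<in> Y" and zle: "le_I I z y" using False by (auto simp: Min_I_def)
    define J where "J = {i\<in>I. z$i = y$i}"
    have JI: "J \<subseteq> I" by (auto simp: J_def)
    have JneI: "J \<noteq> I" using zle unfolding J_def le_I_def by (metis (mono_tags, lifting) less_irrefl mem_Collect_eq)
    have zlt: "\<And>i. i \<in> I - J \<Longrightarrow> z$i < y$i" using zle by (force simp: J_def le_I_def)
    show ?thesis
    proof (cases "J = {}")
      case True
      then have "lt_I I z y" using zlt by (auto simp: lt_I_def)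
      then show ?thesis using nw zY by blast
    next
      case Jne: False
      show ?thesis
      proof (cases "y \<in> WMin_I J Y")
        case True
        have "card J < card I" using JI JneI by (simp add: psubset_card_mono)
        from less.hyps[OF this Jne True] JI show ?thesis by blast
      next
        case False
        then obtain w where wY: "w \<in> Y" and wlt: "lt_I J w y" using yY by (auto simp: WMin_I_def)
        have ev1: "\<forall>\<^sub>F t in at_right (0::real). \<forall>i\<in>I - J. (1-t)*z$i + t*w$i < y$i"
        proof (rule eventually_ball_finite)
          show "finite (I - J)" by simp
          show "\<forall>i\<in>I - J. \<forall>\<^sub>F t in at_right 0. (1 - t) * z $ i + t * w $ i < y $ i"
          proof
            fix i assume i: "i \<in> I - J"
            have "((\<lambda>t::real. (1-t)*z$i + t*w$i) \<longlongrightarrow> (1-0)*z$i + 0*w$i) (at_right 0)"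
              by (intro tendsto_intros)
            then have "((\<lambda>t::real. (1-t)*z$i + t*w$i) \<longlongrightarrow> z$i) (at_right 0)" by simp
            then show "\<forall>\<^sub>F t in at_right 0. (1 - t) * z $ i + t * w $ i < y $ i"
              using zlt[OF i] by (rule order_tendstoD(2))
          qed
        qed
        have ev2: "\<forall>\<^sub>F t in at_right (0::real). 0 < t \<and> t < 1"
          by (simp add: eventually_at_right_field) (rule exI[of _ 1], auto)
        obtain t where t: "0 < t" "t < 1" "\<forall>i\<in>I - J. (1-t)*z$i + t*w$i < y$i"
          using eventually_happens[OF eventually_conj[OF ev1 ev2]] by auto
        define u where "u = (1-t) *\<^sub>R z + t *\<^sub>R w"
        have uY: "u \<in> Y" using cv zY wY t unfolding u_def convex_def by auto
        have "lt_I I u y"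
          unfolding lt_I_def
        proof
          fix i assume i: "i \<in> I"
          show "u$i < y$i"
          proof (cases "i \<in> J")
            case True
            then have "z$i = y$i" "w$i < y$i" using wlt by (auto simp: J_def lt_I_def)
            then have "(1-t)*z$i + t*w$i < (1-t)*y$i + t*y$i" using t by simp
            then show ?thesis by (simp add: u_def algebra_simps)
          next
            case False then show ?thesis using t(3) i by (simp add: u_def)
          qed
        qed
        then show ?thesis using nw uY by blast
      qed
    qed
  qed
qed

theorem corollary6p1:
  fixes X :: "'a set" and f :: "'a \<Rightarrow> real^'m"
  assumes "convex (f ` X)"
  shows "WEff f UNIV X = Eff f UNIV X \<longleftrightarrow>
         (\<Union>I\<in>{I. I \<noteq> {}}. Eff f I X) \<subseteq> Eff f UNIV X"
proof
  assume h: "WEff f UNIV X = Eff f UNIV X"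
  show "(\<Union>I\<in>{I. I \<noteq> {}}. Eff f I X) \<subseteq> Eff f UNIV X"
  proof
    fix x assume "x \<in> (\<Union>I\<in>{I. I \<noteq> {}}. Eff f I X)"
    then obtain I where I: "I \<noteq> {}" "x \<in> Eff f I X" by auto
    have "x \<in> WEff f UNIV X"
      using I unfolding Eff_def WEff_def Min_I_def WMin_I_def le_I_def lt_I_def
      by (auto simp: less_imp_le)
    then show "x \<in> Eff f UNIV X" using h by simp
  qed
next
  assume h: "(\<Union>I\<in>{I. I \<noteq> {}}. Eff f I X) \<subseteq> Eff f UNIV X"
  show "WEff f UNIV X = Eff f UNIV X"
  proof
    show "Eff f UNIV X \<subseteq> WEff f UNIV X"
      unfolding Eff_def WEff_def Min_I_def WMin_I_def le_I_def lt_I_def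
      by (auto simp: less_imp_le) (metis UNIV_I less_imp_le)
    show "WEff f UNIV X \<subseteq> Eff f UNIV X"
    proof
      fix x assume x: "x \<in> WEff f UNIV X"
      then have "x \<in> X" "f x \<in> WMin_I UNIV (f ` X)" by (auto simp: WEff_def)
      from key[OF assms _ this(2)] obtain J where "J \<noteq> {}" "f x \<in> Min_I J (f ` X)" by auto
      then have "x \<in> Eff f J X" using \<open>x \<in> X\<close> by (simp add: Eff_def)
      then show "x \<in> Eff f UNIV X" using h \<open>J \<noteq> {}\<close> by blast
    qed
  qed
qed

end
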